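(* Fix an epoch $t$ and a parameter vector $\theta^t\in\mathbb{R}^P$. Assume there are constants $\kappa_l>0$, $l\in\mathcal{L}$, such that $\|\nabla_l f(\theta^t)-\nabla_l f_i(\theta^t)\|^2\le\kappa_l^2$ for all $i\in\mathcal{N}$ and $l\in\mathcal{L}$. Then $$\mathcal{E}_t:=\Big\|\nabla f(\theta^t)-\sum_{l\in\mathcal{L}_t}\nabla_l h_l^t(\theta^t)\Big\|^2 \le 2\,\mathcal{E}_{t,1}+2\,\mathcal{E}_{t,2},$$ where $\mathcal{E}_{t,1}=\big\|\sum_{l\notin\mathcal{L}_t}\nabla_l f(\theta^t)\big\|^2$ and $\mathcal{E}_{t,2}=\sum_{l\in\mathcal{L}_t}\chi_{\mathbf{w}_{t,l}\|\alpha}\,\kappa_l^2$ with $\chi_{\mathbf{w}_{t,l}\|\alpha}=\sum_{i\in\mathcal{N}}\frac{(w_{i,l}^t-\alpha_i)^2}{\alpha_i}$.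
   Context: There are $N$ clients $\mathcal{N}=\{1,\dots,N\}$; client $i$ has $d_i>0$ samples and local objective $f_i:\mathbb{R}^P\to\mathbb{R}$ (differentiable). Let $\alpha_i=d_i/\sum_{j=1}^N d_j$ and $f=\sum_{i=1}^N\alpha_i f_i$. The parameter vector $\theta\in\mathbb{R}^P$ is partitioned into $L$ layers (blocks) indexed by $\mathcal{L}=\{1,\dots,L\}$; $\nabla_l F(\theta)$ denotes the gradient of $F$ with respect to the block of layer $l$, viewed as a vector of $\mathbb{R}^P$ with zeros outside that block. In epoch $t$, a set $\mathcal{S}^t\subseteq\mathcal{N}$ of clients participates, each $i\in\mathcal{S}^t$ has a selected layer set $\mathcal{L}_i^t\subseteq\mathcal{L}$, and $\mathcal{L}_t=\bigcup_{i\in\mathcal{S}^t}\mathcal{L}_i^t$. Weights: $w_{i,l}^t=d_i/\sum_{j\in\mathcal{S}^t:\,l\in\mathcal{L}_j^t}d_j$ if $i\in\mathcal{S}^t$ and $l\in\mathcal{L}_i^t$, and $w_{i,l}^t=0$ otherwise (for all $i\in\mathcal{N}$). Surrogate objective: $h_l^t(\theta)=\sum_{i\in\mathcal{S}^t}w_{i,l}^t f_i(\theta)$. *)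

theory Defs
  imports "HOL-Analysis.Analysis"
begin

definition grad :: "(real ^ 'p \<Rightarrow> real) \<Rightarrow> real ^ 'p \<Rightarrow> real ^ 'p" where
  "grad F x = (THE D. GDERIV F x :> D)"

text \<open>Layer-l block of the gradient; lay j is the layer of coordinate j;
  zeros outside the block.\<close>
definition block_grad :: "('p \<Rightarrow> nat) \<Rightarrow> nat \<Rightarrow> (real ^ 'p \<Rightarrow> real) \<Rightarrow> real ^ 'p \<Rightarrow> real ^ 'p" where
  "block_grad lay l F x = (\<chi> j. if lay j = l then grad F x $ j else 0)"

definition alpha :: "nat \<Rightarrow> (nat \<Rightarrow> real) \<Rightarrow> nat \<Rightarrow> real" where
  "alpha N d i = d i / (\<Sum>j\<in>{1..N}. d j)"

definition fglob :: "nat \<Rightarrow> (nat \<Rightarrow> real) \<Rightarrow> (nat \<Rightarrow> real ^ 'p \<Rightarrow> real) \<Rightarrow> real ^ 'p \<Rightarrow> real" where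
  "fglob N d fs x = (\<Sum>i\<in>{1..N}. alpha N d i * fs i x)"

definition wgt :: "nat set \<Rightarrow> (nat \<Rightarrow> nat set) \<Rightarrow> (nat \<Rightarrow> real) \<Rightarrow> nat \<Rightarrow> nat \<Rightarrow> real" where
  "wgt S Ls d i l = (if i \<in> S \<and> l \<in> Ls i
      then d i / (\<Sum>j\<in>{j\<in>S. l \<in> Ls j}. d j) else 0)"

definition surr :: "nat set \<Rightarrow> (nat \<Rightarrow> nat set) \<Rightarrow> (nat \<Rightarrow> real) \<Rightarrow> (nat \<Rightarrow> real ^ 'p \<Rightarrow> real) \<Rightarrow> nat \<Rightarrow> real ^ 'p \<Rightarrow> real" where
  "surr S Ls d fs l x = (\<Sum>i\<in>S. wgt S Ls d i l * fs i x)"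

end

theory Submission
  imports Defs
begin

lemma grad_eq:
  fixes F :: "real ^ 'p \<Rightarrow> real"
  assumes "GDERIV F x :> D" shows "grad F x = D"
proof -
  have u: "D' = D" if "GDERIV F x :> D'" for D'
  proof -
    have "(\<lambda>h. h \<bullet> D') = (\<lambda>h. h \<bullet> D)"
      using has_derivative_unique that assms unfolding gderiv_def by blast
    then have "(D' - D) \<bullet> D' = (D' - D) \<bullet> D" by meson
    then have "(D' - D) \<bullet> (D' - D) = 0" by (simp add: inner_diff_right)
    then show ?thesis by simp
  qed
  show ?thesis unfolding grad_def using assms u by (rule the_equality)
qed

lemma gderiv_ex:
  fixes F :: "real ^ 'p \<Rightarrow> real"
  assumes "F differentiable (at x)" shows "GDERIV F x :> grad F x"
proof -
  obtain F' where F': "(F has_derivative F') (at x)" using assms differentiable_def by blast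
  have lin: "linear F'" using F' has_derivative_linear by blast
  have "F' = (\<lambda>h. h \<bullet> adjoint F' 1)"
    using adjoint_works[OF lin] by (simp add: fun_eq_iff)
  then have "GDERIV F x :> adjoint F' 1" unfolding gderiv_def using F' by simp
  then show ?thesis using grad_eq by metis
qed

lemma grad_sum:
  fixes F :: "nat \<Rightarrow> real ^ 'p \<Rightarrow> real"
  assumes "finite I" "\<And>i. i \<in> I \<Longrightarrow> F i differentiable (at x)"
  shows "grad (\<lambda>y. \<Sum>i\<in>I. c i * F i y) x = (\<Sum>i\<in>I. c i *\<^sub>R grad (F i) x)"
proof (rule grad_eq)
  have "((\<lambda>y. \<Sum>i\<in>I. c i * F i y) has_derivative (\<lambda>h. \<Sum>i\<in>I. c i * (h \<bullet> grad (F i) x))) (at x)"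
    apply (rule has_derivative_sum)
    apply (rule has_derivative_mult_right)
    using gderiv_ex[OF assms(2)] unfolding gderiv_def by blast
  moreover have "(\<lambda>h. \<Sum>i\<in>I. c i * (h \<bullet> grad (F i) x)) = (\<lambda>h. h \<bullet> (\<Sum>i\<in>I. c i *\<^sub>R grad (F i) x))"
    by (simp add: inner_sum_right)
  ultimately show "GDERIV (\<lambda>y. \<Sum>i\<in>I. c i * F i y) x :> (\<Sum>i\<in>I. c i *\<^sub>R grad (F i) x)"
    unfolding gderiv_def by simp
qed

definition blk :: "('p \<Rightarrow> nat) \<Rightarrow> nat \<Rightarrow> real ^ 'p \<Rightarrow> real ^ 'p" where
  "blk lay l v = (\<chi> j. if lay j = l then v $ j else 0)"

lemma blk_sum_comp:
  assumes "finite A"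
  shows "(\<Sum>l\<in>A. blk lay l (v l)) $ j = (if lay j \<in> A then v (lay j) $ j else 0)"
  using assms by (simp add: blk_def if_distrib sum.delta' cong: if_cong)

lemma norm_sq_vec: "(norm (x :: real ^ 'p))\<^sup>2 = (\<Sum>j\<in>UNIV. (x $ j)\<^sup>2)"
  unfolding power2_norm_eq_inner inner_vec_def by (simp add: power2_eq_square)

lemma norm_blk_sum:
  assumes "finite A"
  shows "(norm (\<Sum>l\<in>A. blk lay l (v l)))\<^sup>2 = (\<Sum>l\<in>A. (norm (blk lay l (v l)))\<^sup>2)"
proof -
  have "(\<Sum>l\<in>A. (norm (blk lay l (v l)))\<^sup>2) = (\<Sum>l\<in>A. \<Sum>j\<in>UNIV. if lay j = l then (v l $ j)\<^sup>2 else 0)"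
    by (simp add: norm_sq_vec blk_def if_distrib[of "\<lambda>x. x\<^sup>2"] cong: if_cong)
  also have "\<dots> = (\<Sum>j\<in>UNIV. \<Sum>l\<in>A. if lay j = l then (v l $ j)\<^sup>2 else 0)"
    by (rule sum.swap)
  also have "\<dots> = (\<Sum>j\<in>UNIV. (if lay j \<in> A then v (lay j) $ j else 0)\<^sup>2)"
    using assms by (simp add: sum.delta' if_distrib[of "\<lambda>x. x\<^sup>2"] cong: if_cong)
  moreover have "(norm (\<Sum>l\<in>A. blk lay l (v l)))\<^sup>2 = (\<Sum>j\<in>UNIV. (if lay j \<in> A then v (lay j) $ j else 0)\<^sup>2)"
    by (simp only: norm_sq_vec blk_sum_comp[OF assms])
  ultimately show ?thesis by simp
qed

lemma cs_weighted:
  fixes c a n :: "nat \<Rightarrow> real"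
  assumes "\<And>i. i \<in> I \<Longrightarrow> a i > 0"
  shows "(\<Sum>i\<in>I. \<bar>c i\<bar> * n i)\<^sup>2 \<le> (\<Sum>i\<in>I. (c i)\<^sup>2 / a i) * (\<Sum>i\<in>I. a i * (n i)\<^sup>2)"
proof -
  have "(\<Sum>i\<in>I. \<bar>c i\<bar> * n i) = (\<Sum>i\<in>I. (\<bar>c i\<bar> / sqrt (a i)) * (sqrt (a i) * n i))"
  proof (intro sum.cong refl)
    fix i assume "i \<in> I"
    then have "sqrt (a i) \<noteq> 0" using assms[of i] by simp
    then show "\<bar>c i\<bar> * n i = \<bar>c i\<bar> / sqrt (a i) * (sqrt (a i) * n i)" by simp
  qed
  moreover have "(\<Sum>i\<in>I. (\<bar>c i\<bar> / sqrt (a i))\<^sup>2) = (\<Sum>i\<in>I. (c i)\<^sup>2 / a i)"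
    using assms by (intro sum.cong) (auto simp: power_divide less_imp_le)
  moreover have "(\<Sum>i\<in>I. (sqrt (a i) * n i)\<^sup>2) = (\<Sum>i\<in>I. a i * (n i)\<^sup>2)"
    using assms by (intro sum.cong) (auto simp: power_mult_distrib less_imp_le)
  ultimately show ?thesis using Cauchy_Schwarz_ineq_sum[of "\<lambda>i. \<bar>c i\<bar> / sqrt (a i)" "\<lambda>i. sqrt (a i) * n i" I]
    by simp
qed

theorem lemma2:
  fixes N L :: nat
    and d :: "nat \<Rightarrow> real"
    and fs :: "nat \<Rightarrow> real ^ 'p \<Rightarrow> real"
    and lay :: "'p \<Rightarrow> nat"
    and S :: "nat set" and Ls :: "nat \<Rightarrow> nat set"
    and \<theta> :: "real ^ 'p" and \<kappa> :: "nat \<Rightarrow> real"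
  assumes d_pos: "\<And>i. i \<in> {1..N} \<Longrightarrow> d i > 0"
    and diff: "\<And>i x. i \<in> {1..N} \<Longrightarrow> fs i differentiable (at x)"
    and lay_range: "\<And>j. lay j \<in> {1..L}"
    and lay_onto: "\<And>l. l \<in> {1..L} \<Longrightarrow> \<exists>j. lay j = l"
    and S_sub: "S \<subseteq> {1..N}"
    and Ls_sub: "\<And>i. i \<in> S \<Longrightarrow> Ls i \<subseteq> {1..L}"
    and kappa_pos: "\<And>l. l \<in> {1..L} \<Longrightarrow> \<kappa> l > 0"
    and hetero: "\<And>i l. i \<in> {1..N} \<Longrightarrow> l \<in> {1..L} \<Longrightarrow>
        (norm (block_grad lay l (fglob N d fs) \<theta> - block_grad lay l (fs i) \<theta>))\<^sup>2 \<le> (\<kappa> l)\<^sup>2"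
  shows "(let Lt = (\<Union>i\<in>S. Ls i);
              E = (norm (grad (fglob N d fs) \<theta>
                     - (\<Sum>l\<in>Lt. block_grad lay l (surr S Ls d fs l) \<theta>)))\<^sup>2;
              E1 = (norm (\<Sum>l\<in>{1..L} - Lt. block_grad lay l (fglob N d fs) \<theta>))\<^sup>2;
              E2 = (\<Sum>l\<in>Lt. (\<Sum>i\<in>{1..N}. (wgt S Ls d i l - alpha N d i)\<^sup>2 / alpha N d i)
                     * (\<kappa> l)\<^sup>2)
          in E \<le> 2 * E1 + 2 * E2)"
  proof -
  define al where "al i = alpha N d i" for i
  define w where "w i l = wgt S Ls d i l" for i l
  define g where "g i = grad (fs i) \<theta>" for i
  define u where "u = grad (fglob N d fs) \<theta>"
  define gh where "gh l = grad (surr S Ls d fs l) \<theta>" for l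
  define Lt where "Lt = (\<Union>i\<in>S. Ls i)"
  have finS: "finite S" using S_sub finite_subset by blast
  have Lt_sub: "Lt \<subseteq> {1..L}" using Ls_sub unfolding Lt_def by blast
  have finLt: "finite Lt" using Lt_sub finite_subset by blast
  have bg: "block_grad lay l F x = blk lay l (grad F x)" for l F x
    by (simp add: block_grad_def blk_def)
  have Dpos: "(\<Sum>j\<in>{1..N}. d j) > 0" if "i \<in> {1..N}" for i
    using that d_pos by (intro sum_pos) auto
  have al_pos: "al i > 0" if "i \<in> {1..N}" for i
    using Dpos[OF that] d_pos[OF that] by (simp add: al_def alpha_def)
  have w0: "w i l = 0" if "i \<notin> S" for i l using that by (simp add: w_def wgt_def)
  have u_eq: "u = (\<Sum>i\<in>{1..N}. al i *\<^sub>R g i)"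
  proof -
    have "fglob N d fs = (\<lambda>x. \<Sum>i\<in>{1..N}. alpha N d i * fs i x)"
      by (rule ext) (simp add: fglob_def)
    then show ?thesis unfolding u_def al_def g_def using grad_sum[of "{1..N}" fs \<theta>] diff by simp
  qed
  have gh_eq: "gh l = (\<Sum>i\<in>{1..N}. w i l *\<^sub>R g i)" for l
  proof -
    have "surr S Ls d fs l = (\<lambda>x. \<Sum>i\<in>S. wgt S Ls d i l * fs i x)"
      by (rule ext) (simp add: surr_def)
    then have "gh l = (\<Sum>i\<in>S. w i l *\<^sub>R g i)"
      unfolding gh_def w_def g_def
      using grad_sum[OF finS, of fs \<theta> "\<lambda>i. wgt S Ls d i l"] diff S_sub by (simp add: subset_iff)
    also have "\<dots> = (\<Sum>i\<in>{1..N}. w i l *\<^sub>R g i)"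
      using S_sub w0 by (intro sum.mono_neutral_left) auto
    finally show ?thesis .
  qed
  define a where "a = (\<Sum>l\<in>{1..L} - Lt. blk lay l u)"
  define b where "b = (\<Sum>l\<in>Lt. blk lay l (u - gh l))"
  have dec: "u - (\<Sum>l\<in>Lt. blk lay l (gh l)) = a + b"
  proof (subst vec_eq_iff, intro allI)
    fix j
    have "lay j \<in> {1..L}" by (rule lay_range)
    then show "(u - (\<Sum>l\<in>Lt. blk lay l (gh l))) $ j = (a + b) $ j"
      unfolding a_def b_def vector_add_component vector_minus_component
        blk_sum_comp[OF finLt] blk_sum_comp[of "{1..L} - Lt", OF finite_Diff[OF finite_atLeastAtMost]]
      by auto
  qed
  have ab: "(norm (a + b))\<^sup>2 \<le> 2 * (norm a)\<^sup>2 + 2 * (norm b)\<^sup>2"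
  proof -
    have "norm (a + b) \<le> norm a + norm b" by (rule norm_triangle_ineq)
    then have "(norm (a + b))\<^sup>2 \<le> (norm a + norm b)\<^sup>2"
      by (rule power_mono) simp
    also have "\<dots> \<le> 2 * (norm a)\<^sup>2 + 2 * (norm b)\<^sup>2"
      using sum_squares_ge_zero[of "norm a - norm b" 0]
      by (simp add: power2_eq_square algebra_simps)
    finally show ?thesis .
  qed
  have perl: "(norm (blk lay l (u - gh l)))\<^sup>2
      \<le> (\<Sum>i\<in>{1..N}. (w i l - al i)\<^sup>2 / al i) * (\<kappa> l)\<^sup>2" if l: "l \<in> Lt" for l
  proof -
    from l obtain k where k: "k \<in> S" "l \<in> Ls k" unfolding Lt_def by blast
    have kN: "k \<in> {1..N}" using k S_sub by blast
    have lL: "l \<in> {1..L}" using l Lt_sub by blast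
    have sa: "(\<Sum>i\<in>{1..N}. al i) = 1"
      using Dpos[OF kN] by (simp add: al_def alpha_def flip: sum_divide_distrib)
    define T where "T = {j\<in>S. l \<in> Ls j}"
    have finT: "finite T" using finS unfolding T_def by simp
    have DT: "(\<Sum>j\<in>T. d j) > 0"
      using k finT S_sub d_pos unfolding T_def by (intro sum_pos) auto
    have "(\<Sum>i\<in>{1..N}. w i l) = (\<Sum>i\<in>T. w i l)"
      using S_sub by (intro sum.mono_neutral_right) (auto simp: T_def w_def wgt_def)
    also have "\<dots> = (\<Sum>i\<in>T. d i / (\<Sum>j\<in>T. d j))"
      by (intro sum.cong refl) (simp add: T_def w_def wgt_def)
    also have "\<dots> = 1" using DT by (simp flip: sum_divide_distrib)
    finally have sw: "(\<Sum>i\<in>{1..N}. w i l) = 1" .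
    define x where "x i = blk lay l u - blk lay l (g i)" for i
    have rep: "blk lay l (u - gh l) = (\<Sum>i\<in>{1..N}. (w i l - al i) *\<^sub>R x i)"
    proof (subst vec_eq_iff, intro allI)
      fix j
      show "blk lay l (u - gh l) $ j = (\<Sum>i\<in>{1..N}. (w i l - al i) *\<^sub>R x i) $ j"
      proof (cases "lay j = l")
        case True
        have "(\<Sum>i\<in>{1..N}. (w i l - al i) * (u $ j - g i $ j))
          = (\<Sum>i\<in>{1..N}. w i l) * u $ j - (\<Sum>i\<in>{1..N}. al i) * u $ j
            - (\<Sum>i\<in>{1..N}. w i l * g i $ j) + (\<Sum>i\<in>{1..N}. al i * g i $ j)"
          by (simp add: algebra_simps sum.distrib sum_subtractf sum_distrib_right sum_distrib_left)
        then show ?thesis using True sw sa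
          by (simp add: x_def blk_def u_eq gh_eq)
      qed (simp add: x_def blk_def)
    qed
    have "norm (blk lay l (u - gh l)) \<le> (\<Sum>i\<in>{1..N}. norm ((w i l - al i) *\<^sub>R x i))"
      unfolding rep by (rule norm_sum)
    also have "\<dots> = (\<Sum>i\<in>{1..N}. \<bar>w i l - al i\<bar> * norm (x i))" by simp
    finally have "(norm (blk lay l (u - gh l)))\<^sup>2 \<le> (\<Sum>i\<in>{1..N}. \<bar>w i l - al i\<bar> * norm (x i))\<^sup>2"
      by (rule power_mono) simp
    also have "\<dots> \<le> (\<Sum>i\<in>{1..N}. (w i l - al i)\<^sup>2 / al i) * (\<Sum>i\<in>{1..N}. al i * (norm (x i))\<^sup>2)"
      by (rule cs_weighted[of "{1..N}" al, OF al_pos])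
    also have "\<dots> \<le> (\<Sum>i\<in>{1..N}. (w i l - al i)\<^sup>2 / al i) * (\<Sum>i\<in>{1..N}. al i * (\<kappa> l)\<^sup>2)"
    proof (rule mult_left_mono)
      show "(\<Sum>i\<in>{1..N}. al i * (norm (x i))\<^sup>2) \<le> (\<Sum>i\<in>{1..N}. al i * (\<kappa> l)\<^sup>2)"
      proof (rule sum_mono)
        fix i assume i: "i \<in> {1..N}"
        have "(norm (x i))\<^sup>2 \<le> (\<kappa> l)\<^sup>2"
          using hetero[OF i lL] unfolding x_def u_def g_def bg .
        then show "al i * (norm (x i))\<^sup>2 \<le> al i * (\<kappa> l)\<^sup>2"
          using al_pos[OF i] by (simp add: mult_left_mono)
      qed
      show "0 \<le> (\<Sum>i\<in>{1..N}. (w i l - al i)\<^sup>2 / al i)"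
        using al_pos by (intro sum_nonneg) (simp add: less_imp_le)
    qed
    also have "\<dots> = (\<Sum>i\<in>{1..N}. (w i l - al i)\<^sup>2 / al i) * (\<kappa> l)\<^sup>2"
      using sa by (simp flip: sum_distrib_right)
    finally show ?thesis .
  qed
  have bnd: "(norm b)\<^sup>2 \<le> (\<Sum>l\<in>Lt. (\<Sum>i\<in>{1..N}. (w i l - al i)\<^sup>2 / al i) * (\<kappa> l)\<^sup>2)"
    unfolding b_def norm_blk_sum[OF finLt] by (rule sum_mono) (rule perl)
  have "(norm (u - (\<Sum>l\<in>Lt. blk lay l (gh l))))\<^sup>2
      \<le> 2 * (norm a)\<^sup>2 + 2 * (\<Sum>l\<in>Lt. (\<Sum>i\<in>{1..N}. (w i l - al i)\<^sup>2 / al i) * (\<kappa> l)\<^sup>2)"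
    using dec ab bnd by simp
  then show ?thesis
    unfolding Let_def bg
    by (simp add: a_def u_def gh_def Lt_def w_def al_def)
qed

end
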